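(* Let $\mathbb{L}/\mathbb{K}$ be a finite Galois extension of degree $N$ with Galois group $G=\{g_1,\dots,g_N\}$, $g_1=\mathrm{Id}$, and let $\alpha$ be a primitive element of $\mathbb{L}/\mathbb{K}$. Regard $\mathbb{L}\otimes_\mathbb{K}\mathbb{L}$ as an $\mathbb{L}$-vector space via the left factor, so that for any $\mathbb{K}$-linear $f:\mathbb{L}\to\mathbb{L}$ the map $\mathrm{Id}\otimes f$ is $\mathbb{L}$-linear. Let $m_\alpha:\mathbb{L}\to\mathbb{L}$, $x\mapsto\alpha x$, and choose a nonzero $v\in\mathbb{L}\otimes_\mathbb{K}\mathbb{L}$ with $(\mathrm{Id}\otimes m_\alpha)(v)=\alpha\cdot v$. For $g\in G$ set $v_g=(\mathrm{Id}\otimes g^{-1})(v)$. Then each $v_g$ is an eigenvector of $\mathrm{Id}\otimes m_\alpha$ with eigenvalue $g(\alpha)$, $(\mathrm{Id}\otimes g)(v_h)=v_{hg^{-1}}$ for all $g,h\in G$, $(v_{g_1},\dots,v_{g_N})$ is an $\mathbb{L}$-basis of $\mathbb{L}\otimes_\mathbb{K}\mathbb{L}$, and for every $a\in\mathbb{L}[G]$ the matrix of $\mathrm{Id}\otimes a$ in the basis $(v_{g_1},\dots,v_{g_N})$ equals $D_G(a)^\top$. Moreover, $D_G(a)$ is the matrix, in the $\mathbb{L}$-basis $(g_1,\dots,g_N)$ of $\mathbb{L}[G]$, of the $\mathbb{L}$-linear map $\mathbb{L}[G]\to\mathbb{L}[G]$, $f\mapsto f\circ a$.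
   Context: $\mathbb{L}[G]=\{\sum_ga_gg:a_g\in\mathbb{L}\}$ with composition product $(ag)\circ(bh)=(a\,g(b))(gh)$ extended by distributivity; $a=\sum a_gg$ acts on $\mathbb{L}$ as the $\mathbb{K}$-linear map $x\mapsto\sum a_gg(x)$. The $G$-Dickson matrix $D_G(a)$ has rows and columns indexed by $g_1,\dots,g_N$ and entries $D_G(a)_{g,h}=h(a_{h^{-1}g})$. Matrices of linear maps have as columns the coordinates of images of basis vectors. *)

theory Defs
  imports Main
begin

section \<open>Field extension L/K with L = UNIV :: 'a::field and K a subfield\<close>

definition subfield :: "'a::field set \<Rightarrow> bool" where
  "subfield K \<longleftrightarrow> 0 \<in> K \<and> 1 \<in> K \<and>
     (\<forall>x\<in>K. \<forall>y\<in>K. x + y \<in> K \<and> x * y \<in> K) \<and>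
     (\<forall>x\<in>K. - x \<in> K \<and> inverse x \<in> K)"

definition ext_degree :: "'a::field set \<Rightarrow> nat \<Rightarrow> bool" where
  "ext_degree K N \<longleftrightarrow> (\<exists>e::nat \<Rightarrow> 'a. \<forall>x. \<exists>!c::nat \<Rightarrow> 'a.
      (\<forall>i. (i < N \<longrightarrow> c i \<in> K) \<and> (N \<le> i \<longrightarrow> c i = 0)) \<and> x = (\<Sum>i<N. c i * e i))"

definition Gal :: "'a::field set \<Rightarrow> ('a \<Rightarrow> 'a) set" where
  "Gal K = {\<sigma>. bij \<sigma> \<and> (\<forall>x y. \<sigma> (x + y) = \<sigma> x + \<sigma> y \<and> \<sigma> (x * y) = \<sigma> x * \<sigma> y)
                 \<and> (\<forall>k\<in>K. \<sigma> k = k)}"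

definition galois_ext :: "'a::field set \<Rightarrow> nat \<Rightarrow> bool" where
  "galois_ext K N \<longleftrightarrow> subfield K \<and> ext_degree K N \<and> card (Gal K) = N"

definition primitive_element :: "'a::field set \<Rightarrow> 'a \<Rightarrow> bool" where
  "primitive_element K \<alpha> \<longleftrightarrow> (\<forall>F. subfield F \<and> K \<subseteq> F \<and> \<alpha> \<in> F \<longrightarrow> F = UNIV)"

text \<open>Construction: L \<otimes>_K L = (free L-module on symbols <y>, y in L) modulo the L-submodule
  generated by <y+y'> - <y> - <y'> and <k y> - k <y> (k in K).  A finitely supported
  c :: 'a \<Rightarrow> 'a represents \<Sum>_y c(y) \<otimes> y; L-scaling and addition are pointwise.\<close>

definition fsupp :: "('a \<Rightarrow> 'b::zero) \<Rightarrow> bool" where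
  "fsupp c \<longleftrightarrow> finite {y. c y \<noteq> 0}"

definition tb :: "'a::field \<Rightarrow> 'a \<Rightarrow> 'a" where
  "tb y = (\<lambda>z. if z = y then 1 else 0)"

inductive_set tzero :: "'a::field set \<Rightarrow> ('a \<Rightarrow> 'a) set" for K :: "'a set" where
  tz0: "(\<lambda>_. 0) \<in> tzero K"
| tz_add: "c \<in> tzero K \<Longrightarrow> d \<in> tzero K \<Longrightarrow> (\<lambda>z. c z + d z) \<in> tzero K"
| tz_smult: "c \<in> tzero K \<Longrightarrow> (\<lambda>z. a * c z) \<in> tzero K"
| tz_gen_add: "(\<lambda>z. tb (y + y') z - tb y z - tb y' z) \<in> tzero K"
| tz_gen_scal: "k \<in> K \<Longrightarrow> (\<lambda>z. tb (k * y) z - k * tb y z) \<in> tzero K"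

definition teq :: "'a::field set \<Rightarrow> ('a \<Rightarrow> 'a) \<Rightarrow> ('a \<Rightarrow> 'a) \<Rightarrow> bool" where
  "teq K c d \<longleftrightarrow> (\<lambda>z. c z - d z) \<in> tzero K"

text \<open>Id \<otimes> f on representatives: \<Sum>_y c(y) \<otimes> y \<mapsto> \<Sum>_y c(y) \<otimes> f(y).\<close>
definition idt :: "('a::field \<Rightarrow> 'a) \<Rightarrow> ('a \<Rightarrow> 'a) \<Rightarrow> ('a \<Rightarrow> 'a)" where
  "idt f c = (\<lambda>z. \<Sum>y\<in>{y. c y \<noteq> 0 \<and> f y = z}. c y)"

definition tlc :: "('g set) \<Rightarrow> ('g \<Rightarrow> 'a::field) \<Rightarrow> ('g \<Rightarrow> 'a \<Rightarrow> 'a) \<Rightarrow> ('a \<Rightarrow> 'a)" where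
  "tlc G c w = (\<lambda>z. \<Sum>g\<in>G. c g * w g z)"

definition grp_elem :: "('a \<Rightarrow> 'a) set \<Rightarrow> (('a \<Rightarrow> 'a) \<Rightarrow> 'a::field) \<Rightarrow> bool" where
  "grp_elem G a \<longleftrightarrow> (\<forall>g. g \<notin> G \<longrightarrow> a g = 0)"

definition gr_basis :: "('a \<Rightarrow> 'a) \<Rightarrow> (('a \<Rightarrow> 'a) \<Rightarrow> 'a::field)" where
  "gr_basis h = (\<lambda>k. if k = h then 1 else 0)"

text \<open>Composition product (a g) \<circ> (b h) = (a g(b)) (g h), extended by distributivity.\<close>
definition gr_mult :: "('a \<Rightarrow> 'a) set \<Rightarrow> (('a \<Rightarrow> 'a) \<Rightarrow> 'a::field) \<Rightarrow> (('a \<Rightarrow> 'a) \<Rightarrow> 'a) \<Rightarrow> (('a \<Rightarrow> 'a) \<Rightarrow> 'a)" where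
  "gr_mult G a b = (\<lambda>k. \<Sum>g\<in>G. \<Sum>h\<in>G. if g \<circ> h = k then a g * g (b h) else 0)"

definition gr_act :: "('a \<Rightarrow> 'a) set \<Rightarrow> (('a \<Rightarrow> 'a) \<Rightarrow> 'a::field) \<Rightarrow> 'a \<Rightarrow> 'a" where
  "gr_act G a = (\<lambda>x. \<Sum>g\<in>G. a g * g x)"

definition dickson :: "('a \<Rightarrow> 'a) set \<Rightarrow> (('a \<Rightarrow> 'a) \<Rightarrow> 'a::field) \<Rightarrow> ('a \<Rightarrow> 'a) \<Rightarrow> ('a \<Rightarrow> 'a) \<Rightarrow> 'a" where
  "dickson G a g h = h (a (inv h \<circ> g))"

end

theory Submission
  imports Defs "Jordan_Normal_Form.Determinant"
begin


lemma square_indep: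
  fixes M :: "nat \<Rightarrow> nat \<Rightarrow> 'a::field"
  assumes rows: "\<And>l. (\<forall>i<N. (\<Sum>j<N. l j * M j i) = 0) \<Longrightarrow> \<forall>j<N. l j = 0"
    and d: "\<forall>j<N. (\<Sum>i<N. M j i * d i) = 0"
  shows "\<forall>i<N. d i = 0"
proof (rule ccontr)
  assume nz: "\<not> (\<forall>i<N. d i = 0)"
  define A where "A = mat N N (\<lambda>(j,i). M j i)"
  have A: "A \<in> carrier_mat N N" unfolding A_def by simp
  define dv where "dv = vec N d"
  have "dv \<in> carrier_vec N" unfolding dv_def by simp
  moreover have "dv \<noteq> 0\<^sub>v N" using nz unfolding dv_def
    by (metis index_vec index_zero_vec(1))
  moreover have "A *\<^sub>v dv = 0\<^sub>v N"
    by (rule eq_vecI) (auto simp: A_def dv_def mult_mat_vec_def scalar_prod_def d atLeast0LessThan)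
  ultimately have "det A = 0" using det_0_iff_vec_prod_zero_field[OF A] by blast
  hence "det (transpose_mat A) = 0" using det_transpose[OF A] by simp
  then obtain lv where lv: "lv \<in> carrier_vec N" "lv \<noteq> 0\<^sub>v N" "transpose_mat A *\<^sub>v lv = 0\<^sub>v N"
    using det_0_iff_vec_prod_zero_field[of "transpose_mat A" N] A by auto
  have "\<forall>i<N. (\<Sum>j<N. (lv $ j) * M j i) = 0"
  proof (intro allI impI)
    fix i assume i: "i < N"
    have "(transpose_mat A *\<^sub>v lv) $ i = 0" using lv(3) i by simp
    thus "(\<Sum>j<N. (lv $ j) * M j i) = 0" using i lv(1)
      by (simp add: A_def mult_mat_vec_def scalar_prod_def atLeast0LessThan mult.commute)
  qed
  from rows[OF this] have "\<forall>j<N. lv $ j = 0" .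
  hence "lv = 0\<^sub>v N" using lv(1) by (intro eq_vecI) auto
  thus False using lv(2) by simp
qed


no_notation m_inv (\<open>(\<open>open_block notation=\<open>prefix inv\<close>\<close>inv\<index> _)\<close> [81] 80)

lemma gal_D: assumes "h \<in> Gal K"
  shows "bij h" "\<And>x y. h (x + y) = h x + h y" "\<And>x y. h (x * y) = h x * h y" "\<And>k. k \<in> K \<Longrightarrow> h k = k"
  using assms unfolding Gal_def by auto

lemma gal_0: assumes "h \<in> Gal K" shows "h 0 = 0"
proof -
  have "h 0 + h 0 = h 0 + 0" using gal_D(2)[OF assms, of 0 0] by simp
  thus ?thesis by (metis add_left_cancel)
qed

lemma gal_1: assumes "h \<in> Gal K" shows "h 1 = 1"
proof -
  obtain x where x: "h x = 1" using gal_D(1)[OF assms] by (metis bij_is_surj surjD)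
  have "h (1 * x) = h 1 * h x" using gal_D(3)[OF assms] .
  thus ?thesis using x by simp
qed

lemma gal_minus: assumes "h \<in> Gal K" shows "h (- x) = - h x"
proof -
  have "h (x + - x) = h x + h (- x)" using gal_D(2)[OF assms] .
  thus ?thesis using gal_0[OF assms] by (simp add: eq_neg_iff_add_eq_0 add.commute)
qed

lemma gal_diff: assumes "h \<in> Gal K" shows "h (x - y) = h x - h y"
  using gal_D(2)[OF assms, of x "- y"] gal_minus[OF assms, of y] by simp

lemma gal_sum: assumes "h \<in> Gal K" shows "h (\<Sum>i\<in>S. f i) = (\<Sum>i\<in>S. h (f i))"
proof (induction S rule: infinite_finite_induct)
  case (infinite A) thus ?case using gal_0[OF assms] by simp
next
  case empty thus ?case using gal_0[OF assms] by simp
next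
  case (insert x F) thus ?case using gal_D(2)[OF assms] by simp
qed

lemma gal_inverse: assumes "h \<in> Gal K" shows "h (inverse x) = inverse (h x)"
proof (cases "x = 0")
  case True thus ?thesis using gal_0[OF assms] by simp
next
  case False
  have "h (x * inverse x) = h x * h (inverse x)" using gal_D(3)[OF assms] .
  hence "h x * h (inverse x) = 1" using False gal_1[OF assms] by simp
  thus ?thesis by (metis inverse_unique)
qed

lemma gal_id: "id \<in> Gal K" unfolding Gal_def by auto

lemma gal_comp: assumes "g \<in> Gal K" "h \<in> Gal K" shows "g \<circ> h \<in> Gal K"
  using assms unfolding Gal_def by (auto intro: bij_comp)

lemma gal_inv: assumes "g \<in> Gal K" shows "inv g \<in> Gal K"
proof -
  have b: "bij g" using gal_D(1)[OF assms] .
  have i: "inj g" using b bij_is_inj by auto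
  have s: "\<And>x. g (inv g x) = x" using b by (simp add: bij_is_surj surj_f_inv_f)
  show ?thesis unfolding Gal_def
  proof (intro CollectI conjI allI ballI)
    show "bij (inv g)" using b by (simp add: bij_imp_bij_inv)
    fix x y
    show "inv g (x + y) = inv g x + inv g y"
      by (rule inj_onD[OF i]) (auto simp: s gal_D(2)[OF assms])
    show "inv g (x * y) = inv g x * inv g y"
      by (rule inj_onD[OF i]) (auto simp: s gal_D(3)[OF assms])
  next
    fix k assume "k \<in> K"
    thus "inv g k = k" using gal_D(4)[OF assms] i by (metis inv_f_f)
  qed
qed

lemma gal_distinct:
  assumes "g \<in> Gal K" "g' \<in> Gal K" "primitive_element K \<alpha>" "g \<alpha> = g' \<alpha>"
  shows "g = g'"
proof -
  let ?F = "{x. g x = g' x}"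
  have "subfield ?F" unfolding subfield_def
    using assms(1,2) by (auto simp: gal_0 gal_1 gal_D(2,3) gal_minus gal_inverse)
  moreover have "K \<subseteq> ?F" using gal_D(4)[OF assms(1)] gal_D(4)[OF assms(2)] by auto
  ultimately have "?F = UNIV" using assms(3,4) unfolding primitive_element_def by auto
  thus ?thesis by auto
qed

lemma dedekind:
  assumes "finite S" "inj_on gs S" "\<forall>j\<in>S. gs j \<in> Gal K"
    "\<forall>x. (\<Sum>j\<in>S. l j * gs j x) = 0"
  shows "\<forall>j\<in>S. l j = 0"
  using assms
proof (induction S arbitrary: l rule: finite_induct)
  case empty thus ?case by simp
next
  case (insert j0 S)
  have g0: "gs j0 \<in> Gal K" using insert.prems by auto
  have gS: "\<forall>j\<in>S. gs j \<in> Gal K" using insert.prems by auto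
  have injS: "inj_on gs S" using insert.prems by auto
  have rel: "\<And>x. l j0 * gs j0 x + (\<Sum>j\<in>S. l j * gs j x) = 0"
    using insert.prems(3) insert.hyps by simp
  have step: "\<forall>j\<in>S. l j * (gs j y - gs j0 y) = 0" for y
  proof -
    have "\<forall>x. (\<Sum>j\<in>S. (l j * (gs j y - gs j0 y)) * gs j x) = 0"
    proof
      fix x
      have "(\<Sum>j\<in>S. (l j * (gs j y - gs j0 y)) * gs j x)
          = (\<Sum>j\<in>S. l j * gs j (y * x)) - gs j0 y * (\<Sum>j\<in>S. l j * gs j x)"
      proof -
        have "(\<Sum>j\<in>S. l j * gs j (y * x)) = (\<Sum>j\<in>S. l j * gs j y * gs j x)"
          using gS by (intro sum.cong) (auto simp: gal_D(3))
        thus ?thesis by (simp add: algebra_simps sum_subtractf sum_distrib_left)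
      qed
      also have "\<dots> = - (l j0 * gs j0 (y * x)) + gs j0 y * (l j0 * gs j0 x)"
      proof -
        have e1: "(\<Sum>j\<in>S. l j * gs j (y * x)) = - (l j0 * gs j0 (y * x))"
          using rel[of "y*x"] by (simp add: eq_neg_iff_add_eq_0 add.commute)
        have e2: "(\<Sum>j\<in>S. l j * gs j x) = - (l j0 * gs j0 x)"
          using rel[of "x"] by (simp add: eq_neg_iff_add_eq_0 add.commute)
        show ?thesis unfolding e1 e2 by simp
      qed
      also have "\<dots> = 0" using gal_D(3)[OF g0] by (simp add: algebra_simps)
      finally show "(\<Sum>j\<in>S. (l j * (gs j y - gs j0 y)) * gs j x) = 0" .
    qed
    from insert.IH[OF injS gS this] show ?thesis by simp
  qed
  have lS: "\<forall>j\<in>S. l j = 0"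
  proof
    fix j assume j: "j \<in> S"
    have "gs j \<noteq> gs j0" using insert.prems(1) insert.hyps j
      by (metis inj_onD insertI1 insertI2)
    then obtain y where "gs j y \<noteq> gs j0 y" by auto
    thus "l j = 0" using step[of y] j by auto
  qed
  have "l j0 * gs j0 1 = 0" using rel[of 1] lS by simp
  hence "l j0 = 0" using gal_1[OF g0] by simp
  thus ?case using lS by auto
qed



definition PP :: "('a::field \<Rightarrow> 'a) \<Rightarrow> ('a \<Rightarrow> 'a) \<Rightarrow> 'a" where
  "PP c h = (\<Sum>y\<in>{y. c y \<noteq> 0}. c y * h y)"

lemma PP_sum: assumes "finite S" "{y. c y \<noteq> 0} \<subseteq> S"
  shows "PP c h = (\<Sum>y\<in>S. c y * h y)"
  unfolding PP_def by (rule sum.mono_neutral_left) (use assms in auto)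

lemma tzero_fsupp: "c \<in> tzero K \<Longrightarrow> fsupp c"
proof (induction rule: tzero.induct)
  case tz0 thus ?case by (simp add: fsupp_def)
next
  case (tz_add c d)
  have "{z. c z + d z \<noteq> 0} \<subseteq> {z. c z \<noteq> 0} \<union> {z. d z \<noteq> 0}" by auto
  thus ?case using tz_add by (auto simp: fsupp_def intro: finite_subset)
next
  case (tz_smult c a)
  have "{z. a * c z \<noteq> 0} \<subseteq> {z. c z \<noteq> 0}" by auto
  thus ?case using tz_smult by (auto simp: fsupp_def intro: finite_subset)
next
  case (tz_gen_add y y')
  have "{z. tb (y + y') z - tb y z - tb y' z \<noteq> 0} \<subseteq> {y+y', y, y'}" by (auto simp: tb_def)
  thus ?case by (auto simp: fsupp_def intro: finite_subset)
next
  case (tz_gen_scal k y)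
  have "{z. tb (k * y) z - k * tb y z \<noteq> (0::'a)} \<subseteq> {k*y, y}" by (auto simp: tb_def)
  thus ?case by (auto simp: fsupp_def intro: finite_subset)
qed

lemma sum_tb: "finite S \<Longrightarrow> a \<in> S \<Longrightarrow> (\<Sum>z\<in>S. tb a z * f z) = f a"
proof -
  assume "finite S" "a \<in> S"
  have "\<And>z. tb a z * f z = (if z = a then f z else 0)" by (simp add: tb_def)
  hence "(\<Sum>z\<in>S. tb a z * f z) = (\<Sum>z\<in>S. if z = a then f z else 0)" by simp
  thus ?thesis using \<open>finite S\<close> \<open>a \<in> S\<close> by (simp add: sum.delta)
qed

lemma PP_tzero: assumes "c \<in> tzero K" "h \<in> Gal K" shows "PP c h = 0"
  using assms(1)
proof (induction rule: tzero.induct)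
  case tz0 thus ?case by (simp add: PP_def)
next
  case (tz_add c d)
  let ?S = "{z. c z \<noteq> 0} \<union> {z. d z \<noteq> 0}"
  have f: "finite ?S" using tz_add tzero_fsupp unfolding fsupp_def by auto
  have "PP (\<lambda>z. c z + d z) h = (\<Sum>y\<in>?S. (c y + d y) * h y)" by (rule PP_sum[OF f]) auto
  also have "\<dots> = (\<Sum>y\<in>?S. c y * h y) + (\<Sum>y\<in>?S. d y * h y)" by (simp add: distrib_right sum.distrib)
  also have "\<dots> = PP c h + PP d h" using PP_sum[OF f, of c h] PP_sum[OF f, of d h] by auto
  finally show ?case using tz_add by simp
next
  case (tz_smult c a)
  let ?S = "{z. c z \<noteq> 0}"
  have f: "finite ?S" using tz_smult tzero_fsupp unfolding fsupp_def by auto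
  have "PP (\<lambda>z. a * c z) h = (\<Sum>y\<in>?S. (a * c y) * h y)" by (rule PP_sum[OF f]) auto
  also have "\<dots> = a * PP c h" unfolding PP_def by (simp add: sum_distrib_left mult.assoc)
  finally show ?case using tz_smult by simp
next
  case (tz_gen_add y y')
  let ?S = "{y+y', y, y'}"
  have "PP (\<lambda>z. tb (y + y') z - tb y z - tb y' z) h = (\<Sum>z\<in>?S. (tb (y + y') z - tb y z - tb y' z) * h z)"
    by (rule PP_sum) (auto simp: tb_def)
  also have "\<dots> = (\<Sum>z\<in>?S. tb (y + y') z * h z) - (\<Sum>z\<in>?S. tb y z * h z) - (\<Sum>z\<in>?S. tb y' z * h z)"
    by (simp add: left_diff_distrib sum_subtractf)
  also have "\<dots> = h (y+y') - h y - h y'" by (subst (1 2 3) sum_tb) auto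
  also have "\<dots> = 0" using gal_D(2)[OF assms(2)] by simp
  finally show ?case .
next
  case (tz_gen_scal k y)
  let ?S = "{k*y, y}"
  have "PP (\<lambda>z. tb (k * y) z - k * tb y z) h = (\<Sum>z\<in>?S. (tb (k * y) z - k * tb y z) * h z)"
    by (rule PP_sum) (auto simp: tb_def)
  also have "\<dots> = (\<Sum>z\<in>?S. tb (k * y) z * h z) - k * (\<Sum>z\<in>?S. tb y z * h z)"
    by (simp add: left_diff_distrib sum_subtractf sum_distrib_left mult.assoc)
  also have "\<dots> = h (k*y) - k * h y" by (subst (1 2) sum_tb) auto
  also have "\<dots> = 0" using gal_D(3,4)[OF assms(2)] tz_gen_scal by simp
  finally show ?case .
qed

lemma tz_eq: "c \<in> tzero K \<Longrightarrow> (\<And>z. d z = c z) \<Longrightarrow> d \<in> tzero K"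
proof -
  assume "c \<in> tzero K" "\<And>z. d z = c z"
  moreover have "d = c" using \<open>\<And>z. d z = c z\<close> by auto
  ultimately show ?thesis by simp
qed

lemma tz_sum: assumes "finite S" "\<And>x. x \<in> S \<Longrightarrow> f x \<in> tzero K" shows "(\<lambda>z. \<Sum>x\<in>S. f x z) \<in> tzero K"
  using assms
proof (induction S rule: finite_induct)
  case empty thus ?case using tzero.tz0 by simp
next
  case (insert x F)
  have "(\<lambda>z. f x z + (\<Sum>x\<in>F. f x z)) \<in> tzero K"
    using insert by (intro tzero.tz_add) auto
  thus ?case using insert.hyps by simp
qed

lemma tb_lin: fixes n :: nat and K :: "'a::field set" assumes "\<forall>i<n. k i \<in> K"
  shows "(\<lambda>z. tb (\<Sum>i<n. k i * e i) z - (\<Sum>i<n. k i * tb (e i) z)) \<in> tzero K"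
  using assms
proof (induction n)
  case 0
  have "(\<lambda>z. tb (0 + 0) z - tb 0 z - tb 0 z) \<in> tzero K" by (rule tzero.tz_gen_add)
  hence "(\<lambda>z. (-1) * (tb (0 + 0) z - tb 0 z - tb 0 z)) \<in> tzero K" by (rule tzero.tz_smult)
  thus ?case by (rule tz_eq) simp
next
  case (Suc n)
  let ?s = "\<Sum>i<n. k i * e i"
  have a: "(\<lambda>z. tb (?s + k n * e n) z - tb ?s z - tb (k n * e n) z) \<in> tzero K" by (rule tzero.tz_gen_add)
  have b: "(\<lambda>z. tb (k n * e n) z - k n * tb (e n) z) \<in> tzero K" using Suc.prems by (intro tzero.tz_gen_scal) auto
  have c: "(\<lambda>z. tb ?s z - (\<Sum>i<n. k i * tb (e i) z)) \<in> tzero K" using Suc by auto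
  have "(\<lambda>z. ((tb (?s + k n * e n) z - tb ?s z - tb (k n * e n) z) + (tb (k n * e n) z - k n * tb (e n) z))
       + (tb ?s z - (\<Sum>i<n. k i * tb (e i) z))) \<in> tzero K"
    by (intro tzero.tz_add a b c)
  thus ?case by (rule tz_eq) (simp add: algebra_simps)
qed



lemma span_basis:
  fixes K :: "'a::field set" and N :: nat
  assumes ext: "\<forall>x. \<exists>c. (\<forall>i<N. c i \<in> K) \<and> x = (\<Sum>i<N. c i * e i)"
    and fc: "fsupp c"
  shows "\<exists>d. (\<lambda>z. c z - (\<Sum>i<N. d i * tb (e i) z)) \<in> tzero K"
proof -
  obtain kk where kk: "\<And>y. (\<forall>i<N. kk y i \<in> K) \<and> y = (\<Sum>i<N. kk y i * e i)"
    using ext by metis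
  let ?S = "{y. c y \<noteq> 0}"
  have fS: "finite ?S" using fc by (simp add: fsupp_def)
  define d where "d i = (\<Sum>y\<in>?S. c y * kk y i)" for i
  have X: "(\<lambda>z. \<Sum>y\<in>?S. c y * (tb y z - (\<Sum>i<N. kk y i * tb (e i) z))) \<in> tzero K"
  proof (rule tz_sum[OF fS])
    fix y
    have "(\<lambda>z. tb (\<Sum>i<N. kk y i * e i) z - (\<Sum>i<N. kk y i * tb (e i) z)) \<in> tzero K"
      using kk[of y] by (intro tb_lin) auto
    hence "(\<lambda>z. tb y z - (\<Sum>i<N. kk y i * tb (e i) z)) \<in> tzero K" using kk[of y] by simp
    thus "(\<lambda>z. c y * (tb y z - (\<Sum>i<N. kk y i * tb (e i) z))) \<in> tzero K" by (rule tzero.tz_smult)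
  qed
  have "(\<lambda>z. c z - (\<Sum>i<N. d i * tb (e i) z)) \<in> tzero K"
  proof (rule tz_eq[OF X])
    fix z
    have e1: "(\<Sum>y\<in>?S. c y * tb y z) = c z"
    proof -
      have "(\<Sum>y\<in>?S. c y * tb y z) = (\<Sum>y\<in>?S. if y = z then c y else 0)"
        by (intro sum.cong) (auto simp: tb_def)
      also have "\<dots> = c z" using fS by (simp add: sum.delta')
      finally show ?thesis .
    qed
    have e2: "(\<Sum>y\<in>?S. c y * (\<Sum>i<N. kk y i * tb (e i) z)) = (\<Sum>i<N. d i * tb (e i) z)"
      unfolding d_def sum_distrib_left sum_distrib_right by (subst sum.swap) (simp add: mult.assoc)
    show "c z - (\<Sum>i<N. d i * tb (e i) z) = (\<Sum>y\<in>?S. c y * (tb y z - (\<Sum>i<N. kk y i * tb (e i) z)))"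
      by (simp add: right_diff_distrib sum_subtractf e1 e2)
  qed
  thus ?thesis by blast
qed

lemma galois_N: assumes "galois_ext K N"
  shows "N > 0" "finite (Gal K)" "card (Gal K) = N"
    "\<exists>e. \<forall>x. \<exists>c. (\<forall>i<N. c i \<in> K) \<and> x = (\<Sum>i<N. c i * e i)"
proof -
  from assms obtain e where e: "\<forall>x. \<exists>!c::nat \<Rightarrow> 'a.
      (\<forall>i. (i < N \<longrightarrow> c i \<in> K) \<and> (N \<le> i \<longrightarrow> c i = 0)) \<and> x = (\<Sum>i<N. c i * e i)"
    unfolding galois_ext_def ext_degree_def by blast
  show ex: "\<exists>e. \<forall>x. \<exists>c. (\<forall>i<N. c i \<in> K) \<and> x = (\<Sum>i<N. c i * e i)"
    using e by metis
  show N: "N > 0"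
  proof (rule ccontr)
    assume "\<not> N > 0" hence "N = 0" by simp
    then obtain c where "(1::'a) = (\<Sum>i<N. c i * e i)" using e by blast
    thus False using \<open>N = 0\<close> by simp
  qed
  show c: "card (Gal K) = N" using assms unfolding galois_ext_def by simp
  show "finite (Gal K)" using N c card_ge_0_finite by auto
qed

lemma kernel:
  fixes K :: "'a::field set" and N :: nat
  assumes gal: "galois_ext K N" and fc: "fsupp c" and P0: "\<forall>h\<in>Gal K. PP c h = 0"
  shows "c \<in> tzero K"
proof -
  obtain e where ext: "\<forall>x. \<exists>c. (\<forall>i<N. c i \<in> K) \<and> x = (\<Sum>i<N. c i * e i)"
    using galois_N(4)[OF gal] by blast
  obtain d where d: "(\<lambda>z. c z - (\<Sum>i<N. d i * tb (e i) z)) \<in> tzero K"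
    using span_basis[OF ext fc] by blast
  let ?D = "\<lambda>z. (\<Sum>i<N. d i * tb (e i) z)"
  let ?S = "{y. c y \<noteq> 0} \<union> e ` {..<N}"
  have fS: "finite ?S" using fc by (simp add: fsupp_def)
  have supD: "{y. ?D y \<noteq> 0} \<subseteq> ?S"
  proof
    fix y assume "y \<in> {y. ?D y \<noteq> 0}"
    hence ne: "?D y \<noteq> 0" by simp
    have "\<not> (\<forall>i<N. tb (e i) y = 0)"
    proof
      assume "\<forall>i<N. tb (e i) y = 0"
      hence "?D y = 0" by simp
      thus False using ne by simp
    qed
    then obtain i where "i < N" "tb (e i) y \<noteq> 0" by blast
    thus "y \<in> ?S" by (auto simp: tb_def split: if_splits)
  qed
  have hD: "(\<Sum>i<N. d i * h (e i)) = 0" if h: "h \<in> Gal K" for h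
  proof -
    have "PP (\<lambda>z. c z - ?D z) h = 0" using PP_tzero[OF d h] .
    moreover have "PP (\<lambda>z. c z - ?D z) h = (\<Sum>y\<in>?S. (c y - ?D y) * h y)"
      using supD by (intro PP_sum[OF fS]) auto
    moreover have "(\<Sum>y\<in>?S. (c y - ?D y) * h y) = (\<Sum>y\<in>?S. c y * h y) - (\<Sum>y\<in>?S. ?D y * h y)"
      by (simp add: left_diff_distrib sum_subtractf)
    moreover have "(\<Sum>y\<in>?S. c y * h y) = 0" using PP_sum[OF fS, of c h] P0 h by auto
    moreover have "(\<Sum>y\<in>?S. ?D y * h y) = (\<Sum>i<N. d i * h (e i))"
    proof -
      have "(\<Sum>y\<in>?S. ?D y * h y) = (\<Sum>i<N. d i * (\<Sum>y\<in>?S. tb (e i) y * h y))"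
        unfolding sum_distrib_left sum_distrib_right by (subst sum.swap) (simp add: mult.assoc mult.left_commute)
      also have "\<dots> = (\<Sum>i<N. d i * h (e i))"
        by (intro sum.cong refl) (subst sum_tb[OF fS], auto)
      finally show ?thesis .
    qed
    ultimately show ?thesis by simp
  qed
  obtain gs where gs: "bij_betw gs {0..<N} (Gal K)"
    using ex_bij_betw_nat_finite[OF galois_N(2)[OF gal]] galois_N(3)[OF gal] by auto
  have gsG: "\<forall>j\<in>{..<N}. gs j \<in> Gal K" using gs by (auto simp: bij_betw_def atLeast0LessThan)
  have gsi: "inj_on gs {..<N}" using gs by (auto simp: bij_betw_def atLeast0LessThan)
  have dz: "\<forall>i<N. d i = 0"
  proof (rule square_indep[where M = "\<lambda>j i. gs j (e i)"])
    fix l assume rows: "\<forall>i<N. (\<Sum>j<N. l j * gs j (e i)) = 0"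
    have "\<forall>x. (\<Sum>j\<in>{..<N}. l j * gs j x) = 0"
    proof
      fix x
      obtain k where k: "\<forall>i<N. k i \<in> K" "x = (\<Sum>i<N. k i * e i)" using ext by blast
      have "(\<Sum>j\<in>{..<N}. l j * gs j x) = (\<Sum>j<N. l j * (\<Sum>i<N. k i * gs j (e i)))"
      proof (intro sum.cong refl)
        fix j assume j: "j \<in> {..<N}"
        have g: "gs j \<in> Gal K" using gsG j by auto
        have "gs j x = (\<Sum>i<N. gs j (k i * e i))" unfolding k(2) by (rule gal_sum[OF g])
        also have "\<dots> = (\<Sum>i<N. k i * gs j (e i))"
          using k(1) by (intro sum.cong refl) (auto simp: gal_D(3,4)[OF g])
        finally show "l j * gs j x = l j * (\<Sum>i<N. k i * gs j (e i))" by simp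
      qed
      also have "\<dots> = (\<Sum>i<N. k i * (\<Sum>j<N. l j * gs j (e i)))"
        unfolding sum_distrib_left by (subst sum.swap) (simp add: mult.assoc mult.left_commute)
      also have "\<dots> = 0" using rows by simp
      finally show "(\<Sum>j\<in>{..<N}. l j * gs j x) = 0" .
    qed
    from dedekind[OF _ gsi gsG this] show "\<forall>j<N. l j = 0" by simp
  next
    show "\<forall>j<N. (\<Sum>i<N. gs j (e i) * d i) = 0"
      using hD gsG by (simp add: mult.commute)
  qed
  show ?thesis
    by (rule tz_eq[OF d]) (simp add: dz)
qed



lemma supp_idt: "{z. idt f c z \<noteq> 0} \<subseteq> f ` {y. c y \<noteq> 0}"
proof
  fix z assume "z \<in> {z. idt f c z \<noteq> 0}"
  hence ne: "(\<Sum>y\<in>{y. c y \<noteq> 0 \<and> f y = z}. c y) \<noteq> 0" unfolding idt_def by simp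
  have "{y. c y \<noteq> 0 \<and> f y = z} \<noteq> {}"
  proof
    assume "{y. c y \<noteq> 0 \<and> f y = z} = {}"
    thus False using ne by (metis sum.empty)
  qed
  thus "z \<in> f ` {y. c y \<noteq> 0}" by auto
qed

lemma fsupp_idt: "fsupp c \<Longrightarrow> fsupp (idt f c)"
  unfolding fsupp_def using supp_idt by (metis finite_imageI finite_subset)

lemma PP_idt: assumes "fsupp c" shows "PP (idt f c) h = PP c (h \<circ> f)"
proof -
  let ?S = "{y. c y \<noteq> 0}"
  have fS: "finite ?S" using assms by (simp add: fsupp_def)
  have "PP (idt f c) h = (\<Sum>z\<in>f ` ?S. idt f c z * h z)"
    by (rule PP_sum) (use fS supp_idt in auto)
  also have "\<dots> = (\<Sum>z\<in>f ` ?S. \<Sum>y\<in>{y\<in>?S. f y = z}. c y * h (f y))"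
  proof (intro sum.cong refl)
    fix z assume "z \<in> f ` ?S"
    have "idt f c z * h z = (\<Sum>y\<in>{y\<in>?S. f y = z}. c y) * h z" unfolding idt_def by simp
    also have "\<dots> = (\<Sum>y\<in>{y\<in>?S. f y = z}. c y * h (f y))" by (simp add: sum_distrib_right)
    finally show "idt f c z * h z = (\<Sum>y\<in>{y\<in>?S. f y = z}. c y * h (f y))" .
  qed
  also have "\<dots> = (\<Sum>y\<in>?S. c y * h (f y))" using sum.image_gen[OF fS, of "\<lambda>y. c y * h (f y)" f] by simp
  finally show ?thesis unfolding PP_def by simp
qed

lemma fsupp_scale: fixes c :: "'a \<Rightarrow> 'b::field" shows "fsupp c \<Longrightarrow> fsupp (\<lambda>z. a * c z)"
  unfolding fsupp_def by (rule finite_subset[rotated]) auto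

lemma PP_scale: assumes "fsupp c" shows "PP (\<lambda>z. a * c z) h = a * PP c h"
proof -
  have "PP (\<lambda>z. a * c z) h = (\<Sum>y\<in>{y. c y \<noteq> 0}. (a * c y) * h y)"
    by (rule PP_sum) (use assms in \<open>auto simp: fsupp_def\<close>)
  thus ?thesis unfolding PP_def by (simp add: sum_distrib_left mult.assoc)
qed

lemma fsupp_diff: fixes c :: "'a \<Rightarrow> 'b::field" shows "fsupp c \<Longrightarrow> fsupp d \<Longrightarrow> fsupp (\<lambda>z. c z - d z)"
  unfolding fsupp_def by (rule finite_subset[of _ "{z. c z \<noteq> 0} \<union> {z. d z \<noteq> 0}"]) auto

lemma PP_diff: assumes "fsupp c" "fsupp d" shows "PP (\<lambda>z. c z - d z) h = PP c h - PP d h"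
proof -
  let ?S = "{z. c z \<noteq> 0} \<union> {z. d z \<noteq> 0}"
  have f: "finite ?S" using assms unfolding fsupp_def by auto
  have "PP (\<lambda>z. c z - d z) h = (\<Sum>y\<in>?S. (c y - d y) * h y)" by (rule PP_sum[OF f]) auto
  also have "\<dots> = (\<Sum>y\<in>?S. c y * h y) - (\<Sum>y\<in>?S. d y * h y)" by (simp add: left_diff_distrib sum_subtractf)
  also have "\<dots> = PP c h - PP d h" using PP_sum[OF f, of c h] PP_sum[OF f, of d h] by auto
  finally show ?thesis .
qed

lemma PP_zero: "PP (\<lambda>_. 0) h = 0" by (simp add: PP_def)

lemma fsupp_tlc: assumes "finite G" "\<forall>g\<in>G. fsupp (w g)" shows "fsupp (tlc G c w)"
proof -
  have "{z. tlc G c w z \<noteq> 0} \<subseteq> (\<Union>g\<in>G. {z. w g z \<noteq> 0})"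
  proof
    fix z assume "z \<in> {z. tlc G c w z \<noteq> 0}"
    hence ne: "(\<Sum>g\<in>G. c g * w g z) \<noteq> 0" unfolding tlc_def by simp
    have "\<not> (\<forall>g\<in>G. w g z = 0)"
    proof
      assume "\<forall>g\<in>G. w g z = 0"
      hence "(\<Sum>g\<in>G. c g * w g z) = 0" by simp
      thus False using ne by simp
    qed
    thus "z \<in> (\<Union>g\<in>G. {z. w g z \<noteq> 0})" by auto
  qed
  moreover have "finite (\<Union>g\<in>G. {z. w g z \<noteq> 0})" using assms by (auto simp: fsupp_def)
  ultimately show ?thesis unfolding fsupp_def by (rule finite_subset)
qed

lemma PP_tlc: assumes "finite G" "\<forall>g\<in>G. fsupp (w g)"
  shows "PP (tlc G c w) h = (\<Sum>g\<in>G. c g * PP (w g) h)"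
proof -
  let ?S = "\<Union>g\<in>G. {z. w g z \<noteq> 0}"
  have f: "finite ?S" using assms by (auto simp: fsupp_def)
  have s: "{z. tlc G c w z \<noteq> 0} \<subseteq> ?S"
  proof
    fix z assume "z \<in> {z. tlc G c w z \<noteq> 0}"
    hence ne: "(\<Sum>g\<in>G. c g * w g z) \<noteq> 0" unfolding tlc_def by simp
    have "\<not> (\<forall>g\<in>G. w g z = 0)"
    proof
      assume "\<forall>g\<in>G. w g z = 0"
      hence "(\<Sum>g\<in>G. c g * w g z) = 0" by simp
      thus False using ne by simp
    qed
    thus "z \<in> ?S" by auto
  qed
  have "PP (tlc G c w) h = (\<Sum>y\<in>?S. (\<Sum>g\<in>G. c g * w g y) * h y)"
    using PP_sum[OF f s] unfolding tlc_def by simp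
  also have "\<dots> = (\<Sum>g\<in>G. c g * (\<Sum>y\<in>?S. w g y * h y))"
    unfolding sum_distrib_left sum_distrib_right by (subst sum.swap) (simp add: mult.assoc)
  also have "\<dots> = (\<Sum>g\<in>G. c g * PP (w g) h)"
    by (intro sum.cong refl, subst PP_sum[OF f]) auto
  finally show ?thesis .
qed

lemma teq_iff:
  assumes gal: "galois_ext K N" and "fsupp c" "fsupp d"
  shows "teq K c d \<longleftrightarrow> (\<forall>h\<in>Gal K. PP c h = PP d h)"
proof
  assume "teq K c d"
  hence "(\<lambda>z. c z - d z) \<in> tzero K" unfolding teq_def .
  thus "\<forall>h\<in>Gal K. PP c h = PP d h" using PP_tzero PP_diff[OF assms(2,3)] by fastforce
next
  assume "\<forall>h\<in>Gal K. PP c h = PP d h"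
  hence "\<forall>h\<in>Gal K. PP (\<lambda>z. c z - d z) h = 0" using PP_diff[OF assms(2,3)] by simp
  thus "teq K c d" unfolding teq_def using kernel[OF gal fsupp_diff[OF assms(2,3)]] by blast
qed



lemma comp_eq_iff: assumes "bij k" shows "(k \<circ> g = h) \<longleftrightarrow> (g = inv k \<circ> h)"
proof
  assume "k \<circ> g = h"
  hence "inv k \<circ> (k \<circ> g) = inv k \<circ> h" by simp
  moreover have "inv k \<circ> k = id" using assms bij_is_inj inj_iff by blast
  ultimately show "g = inv k \<circ> h" by (simp add: o_assoc)
next
  assume "g = inv k \<circ> h"
  moreover have "k \<circ> inv k = id" using assms bij_is_surj surj_iff by blast
  ultimately show "k \<circ> g = h" by (simp add: o_assoc)
qed

theorem mainTheorem7:
  fixes K :: "'a::field set" and N :: nat and \<alpha> :: 'a and v :: "'a \<Rightarrow> 'a"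
  assumes gal: "galois_ext K N"
    and prim: "primitive_element K \<alpha>"
    and v_fin: "fsupp v"
    and v_nz: "\<not> teq K v (\<lambda>_. 0)"
    and v_eig: "teq K (idt (\<lambda>x. \<alpha> * x) v) (\<lambda>z. \<alpha> * v z)"
  defines "G \<equiv> Gal K"
    and "vg \<equiv> (\<lambda>g. idt (inv g) v)"
  shows
    "(\<forall>g\<in>G. \<not> teq K (vg g) (\<lambda>_. 0) \<and>
             teq K (idt (\<lambda>x. \<alpha> * x) (vg g)) (\<lambda>z. g \<alpha> * vg g z))
   \<and> (\<forall>g\<in>G. \<forall>h\<in>G. teq K (idt g (vg h)) (vg (h \<circ> inv g)))
   \<and> (\<forall>w. fsupp w \<longrightarrow> (\<exists>!c. grp_elem G c \<and> teq K w (tlc G c vg)))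
   \<and> (\<forall>a. grp_elem G a \<longrightarrow>
        (\<forall>h\<in>G. teq K (idt (gr_act G a) (vg h)) (tlc G (\<lambda>g. dickson G a h g) vg)))
   \<and> (\<forall>a. grp_elem G a \<longrightarrow>
        (\<forall>c f. grp_elem G f \<longrightarrow> gr_mult G (\<lambda>k. c * f k) a = (\<lambda>k. c * gr_mult G f a k))
      \<and> (\<forall>h\<in>G. gr_mult G (gr_basis h) a = (\<lambda>g. if g \<in> G then dickson G a g h else 0)))"
proof -
  have GG: "G = Gal K" using G_def by simp
  have finG: "finite G" using galois_N(2)[OF gal] GG by simp
  have idG: "id \<in> G" using gal_id GG by simp
  have compG: "\<And>g h. g \<in> G \<Longrightarrow> h \<in> G \<Longrightarrow> g \<circ> h \<in> G" using gal_comp GG by simp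
  have invG: "\<And>g. g \<in> G \<Longrightarrow> inv g \<in> G" using gal_inv GG by simp
  have bijG: "\<And>g. g \<in> G \<Longrightarrow> bij g" using gal_D(1) GG by simp
  have teqG: "\<And>c d. fsupp c \<Longrightarrow> fsupp d \<Longrightarrow> teq K c d \<longleftrightarrow> (\<forall>h\<in>G. PP c h = PP d h)"
    using teq_iff[OF gal] GG by simp
  have fvg: "\<And>g. fsupp (vg g)" unfolding vg_def using fsupp_idt[OF v_fin] .
  have fvgG: "\<forall>g\<in>G. fsupp (vg g)" using fvg by simp
  have PPvg0: "\<And>g h. PP (vg g) h = PP v (h \<circ> inv g)" unfolding vg_def using PP_idt[OF v_fin] .
  have PPmult: "\<And>c h b. h \<in> G \<Longrightarrow> PP c (h \<circ> (\<lambda>x. b * x)) = h b * PP c h"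
  proof -
    fix c h b assume h: "h \<in> G"
    have "PP c (h \<circ> (\<lambda>x. b * x)) = (\<Sum>y\<in>{y. c y \<noteq> 0}. h b * (c y * h y))"
      unfolding PP_def using gal_D(3)[of h K] h GG by (intro sum.cong refl) (simp add: mult.left_commute)
    thus "PP c (h \<circ> (\<lambda>x. b * x)) = h b * PP c h" unfolding PP_def by (simp add: sum_distrib_left)
  qed
  define t where "t = PP v id"
  have Pv: "PP v h = 0" if h: "h \<in> G" "h \<noteq> id" for h
  proof -
    have "PP (idt (\<lambda>x. \<alpha> * x) v) h = PP (\<lambda>z. \<alpha> * v z) h"
      using v_eig teqG[OF fsupp_idt[OF v_fin] fsupp_scale[OF v_fin]] h by blast
    hence "h \<alpha> * PP v h = \<alpha> * PP v h"
      using PP_idt[OF v_fin] PPmult[OF h(1)] PP_scale[OF v_fin] by simp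
    moreover have "h \<alpha> \<noteq> \<alpha>" using gal_distinct[of h K id \<alpha>] h prim GG gal_id by auto
    ultimately show ?thesis by simp
  qed
  have t0: "t \<noteq> 0"
  proof
    assume "t = 0"
    hence "\<forall>h\<in>G. PP v h = PP (\<lambda>_. 0) h" using Pv PP_zero unfolding t_def by (metis id_apply)
    hence "teq K v (\<lambda>_. 0)" using teqG[OF v_fin] by (simp add: fsupp_def)
    thus False using v_nz by simp
  qed
  have Pvg: "PP (vg g) h = (if h = g then t else 0)" if "g \<in> G" "h \<in> G" for g h
  proof (cases "h = g")
    case True
    have "h \<circ> inv g = id" using True bijG[OF that(1)]
      by (metis bij_is_surj surj_iff)
    thus ?thesis using True PPvg0 t_def by simp
  next
    case False
    have "h \<circ> inv g \<noteq> id"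
    proof
      assume "h \<circ> inv g = id"
      hence "h \<circ> inv g \<circ> g = g" by simp
      moreover have "inv g \<circ> g = id" using bijG[OF that(1)] bij_is_inj inj_iff by blast
      ultimately have "h = g" by (simp add: o_assoc[symmetric])
      thus False using False by simp
    qed
    thus ?thesis using Pv[of "h \<circ> inv g"] compG invG that False PPvg0 by simp
  qed
  have part1: "\<forall>g\<in>G. \<not> teq K (vg g) (\<lambda>_. 0) \<and>
             teq K (idt (\<lambda>x. \<alpha> * x) (vg g)) (\<lambda>z. g \<alpha> * vg g z)"
  proof (intro ballI conjI)
    fix g assume g: "g \<in> G"
    show "\<not> teq K (vg g) (\<lambda>_. 0)"
    proof
      assume "teq K (vg g) (\<lambda>_. 0)"
      hence "PP (vg g) g = PP (\<lambda>_. 0) g" using teqG[OF fvg] g by (simp add: fsupp_def)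
      hence "PP (vg g) g = 0" by (simp add: PP_zero)
      thus False using Pvg[OF g g] t0 by simp
    qed
    show "teq K (idt (\<lambda>x. \<alpha> * x) (vg g)) (\<lambda>z. g \<alpha> * vg g z)"
      unfolding teqG[OF fsupp_idt[OF fvg] fsupp_scale[OF fvg]]
    proof
      fix h assume h: "h \<in> G"
      show "PP (idt (\<lambda>x. \<alpha> * x) (vg g)) h = PP (\<lambda>z. g \<alpha> * vg g z) h"
        using PP_idt[OF fvg] PPmult[OF h] PP_scale[OF fvg] Pvg[OF g h] by simp
    qed
  qed
  have part2: "\<forall>g\<in>G. \<forall>h\<in>G. teq K (idt g (vg h)) (vg (h \<circ> inv g))"
  proof (intro ballI)
    fix g h assume g: "g \<in> G" and h: "h \<in> G"
    have "inv (h \<circ> inv g) = g \<circ> inv h"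
      using bijG[OF g] bijG[OF h]
      by (simp add: o_inv_distrib bij_imp_bij_inv inv_inv_eq)
    thus "teq K (idt g (vg h)) (vg (h \<circ> inv g))"
      unfolding teqG[OF fsupp_idt[OF fvg] fvg]
      by (simp add: PP_idt[OF fvg] PPvg0 o_assoc)
  qed
  have part3: "\<forall>w. fsupp w \<longrightarrow> (\<exists>!c. grp_elem G c \<and> teq K w (tlc G c vg))"
  proof (intro allI impI)
    fix w :: "'a \<Rightarrow> 'a" assume fw: "fsupp w"
    have ftlc: "\<And>c. fsupp (tlc G c vg)" using fsupp_tlc[OF finG fvgG] by simp
    have Ptlc: "\<And>c h. h \<in> G \<Longrightarrow> PP (tlc G c vg) h = c h * t"
    proof -
      fix c h assume h: "h \<in> G"
      have "PP (tlc G c vg) h = (\<Sum>g\<in>G. c g * PP (vg g) h)" using PP_tlc[OF finG fvgG] by simp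
      also have "\<dots> = (\<Sum>g\<in>G. if g = h then c g * t else 0)"
        using Pvg h by (intro sum.cong refl) auto
      also have "\<dots> = c h * t" using finG h by (simp add: sum.delta')
      finally show "PP (tlc G c vg) h = c h * t" .
    qed
    have key: "\<And>c. teq K w (tlc G c vg) \<longleftrightarrow> (\<forall>h\<in>G. PP w h = c h * t)"
      using teqG[OF fw ftlc] Ptlc by simp
    show "\<exists>!c. grp_elem G c \<and> teq K w (tlc G c vg)"
    proof
      let ?c = "\<lambda>g. if g \<in> G then PP w g / t else 0"
      show "grp_elem G ?c \<and> teq K w (tlc G ?c vg)"
        unfolding key grp_elem_def using t0 by simp
    next
      fix c assume c: "grp_elem G c \<and> teq K w (tlc G c vg)"
      show "c = (\<lambda>g. if g \<in> G then PP w g / t else 0)"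
      proof
        fix g show "c g = (if g \<in> G then PP w g / t else 0)"
          using c t0 unfolding key grp_elem_def by (auto simp: field_simps)
      qed
    qed
  qed
  have part4: "\<forall>a. grp_elem G a \<longrightarrow>
        (\<forall>h\<in>G. teq K (idt (gr_act G a) (vg h)) (tlc G (\<lambda>g. dickson G a h g) vg))"
  proof (intro allI impI ballI)
    fix a h assume a: "grp_elem G a" and h: "h \<in> G"
    have ftlc: "\<And>c. fsupp (tlc G c vg)" using fsupp_tlc[OF finG fvgG] by simp
    show "teq K (idt (gr_act G a) (vg h)) (tlc G (\<lambda>g. dickson G a h g) vg)"
      unfolding teqG[OF fsupp_idt[OF fvg] ftlc]
    proof
      fix k assume k: "k \<in> G"
      have kG: "k \<in> Gal K" using k GG by simp
      have ik: "\<And>g. k \<circ> g = h \<longleftrightarrow> g = inv k \<circ> h"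
        using bijG[OF k] by (rule comp_eq_iff)
      have "PP (idt (gr_act G a) (vg h)) k = PP (vg h) (k \<circ> gr_act G a)" using PP_idt[OF fvg] .
      also have "\<dots> = (\<Sum>g\<in>G. k (a g) * PP (vg h) (k \<circ> g))"
      proof -
        have "PP (vg h) (k \<circ> gr_act G a) = (\<Sum>y\<in>{y. vg h y \<noteq> 0}. \<Sum>g\<in>G. k (a g) * (vg h y * k (g y)))"
          unfolding PP_def gr_act_def
          by (intro sum.cong refl) (simp add: gal_sum[OF kG] gal_D(3)[OF kG] sum_distrib_left mult.left_commute)
        also have "\<dots> = (\<Sum>g\<in>G. k (a g) * PP (vg h) (k \<circ> g))"
          unfolding PP_def sum_distrib_left by (subst sum.swap) simp
        finally show ?thesis .
      qed
      also have "\<dots> = (\<Sum>g\<in>G. if g = inv k \<circ> h then k (a g) * t else 0)"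
        using Pvg[OF h] compG[OF k] ik by (intro sum.cong refl) auto
      also have "\<dots> = k (a (inv k \<circ> h)) * t" using finG compG[OF invG[OF k] h] by (simp add: sum.delta')
      also have "\<dots> = PP (tlc G (\<lambda>g. dickson G a h g) vg) k"
      proof -
        have "PP (tlc G (\<lambda>g. dickson G a h g) vg) k = (\<Sum>g\<in>G. dickson G a h g * PP (vg g) k)"
          using PP_tlc[OF finG fvgG] by simp
        also have "\<dots> = (\<Sum>g\<in>G. if g = k then dickson G a h g * t else 0)"
          using Pvg k by (intro sum.cong refl) auto
        also have "\<dots> = dickson G a h k * t" using finG k by (simp add: sum.delta')
        finally show ?thesis unfolding dickson_def by simp
      qed
      finally show "PP (idt (gr_act G a) (vg h)) k = PP (tlc G (\<lambda>g. dickson G a h g) vg) k" .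
    qed
  qed
  have part5: "\<forall>a. grp_elem G a \<longrightarrow>
        (\<forall>c f. grp_elem G f \<longrightarrow> gr_mult G (\<lambda>k. c * f k) a = (\<lambda>k. c * gr_mult G f a k))
      \<and> (\<forall>h\<in>G. gr_mult G (gr_basis h) a = (\<lambda>g. if g \<in> G then dickson G a g h else 0))"
  proof (intro allI impI conjI ballI)
    fix a c f
    show "gr_mult G (\<lambda>k. c * f k) a = (\<lambda>k. c * gr_mult G f a k)"
      unfolding gr_mult_def by (simp add: sum_distrib_left if_distrib mult.assoc cong: if_cong)
  next
    fix a h assume h: "h \<in> G"
    show "gr_mult G (gr_basis h) a = (\<lambda>g. if g \<in> G then dickson G a g h else 0)"
    proof
      fix k
      have "gr_mult G (gr_basis h) a k = (\<Sum>h'\<in>G. if h \<circ> h' = k then h (a h') else 0)"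
      proof -
        have "\<And>g. (\<Sum>h'\<in>G. if g \<circ> h' = k then gr_basis h g * g (a h') else 0)
            = (if g = h then (\<Sum>h'\<in>G. if h \<circ> h' = k then h (a h') else 0) else 0)"
        proof -
          fix g :: "'a \<Rightarrow> 'a"
          show "(\<Sum>h'\<in>G. if g \<circ> h' = k then gr_basis h g * g (a h') else 0)
            = (if g = h then (\<Sum>h'\<in>G. if h \<circ> h' = k then h (a h') else 0) else 0)"
          proof (cases "g = h")
            case True
            have b: "gr_basis h h = 1" by (simp add: gr_basis_def)
            show ?thesis unfolding True b by (simp only: mult_1_left refl if_True)
          next
            case False
            have b: "gr_basis h g = 0" using False by (simp add: gr_basis_def)
            show ?thesis unfolding b using False by (simp only: mult_zero_left if_False if_cancel sum.neutral_const)
          qed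
        qed
        hence "gr_mult G (gr_basis h) a k = (\<Sum>g\<in>G. if g = h then (\<Sum>h'\<in>G. if h \<circ> h' = k then h (a h') else 0) else 0)"
          unfolding gr_mult_def by simp
        thus ?thesis using finG h by (simp add: sum.delta)
      qed
      also have "\<dots> = (if k \<in> G then dickson G a k h else 0)"
      proof (cases "k \<in> G")
        case True
        have ik: "\<And>g. h \<circ> g = k \<longleftrightarrow> g = inv h \<circ> k"
          using bijG[OF h] by (rule comp_eq_iff)
        show ?thesis using True finG compG[OF invG[OF h] True]
          by (simp add: ik sum.delta' dickson_def)
      next
        case False
        hence "\<And>h'. h' \<in> G \<Longrightarrow> h \<circ> h' \<noteq> k" using compG[OF h] by auto
        thus ?thesis using False by simp
      qed
      finally show "gr_mult G (gr_basis h) a k = (if k \<in> G then dickson G a k h else 0)" .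
    qed
  qed
  show ?thesis using part1 part2 part3 part4 part5 by blast
qed

end
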